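(* Let $0<m<L$, $\alpha>0$, and set $\kappa = L/m$. Suppose that $\delta \in \left[0, \tfrac{2}{\kappa+1}\right)$ and $\rho \geq \rho_\mathrm{GD}(\delta) := \max\big(1-(1-\delta)\alpha m,\ (1+\delta)\alpha L -1\big)$. If \[ \alpha \leq \frac{1}{1-\delta}\left( \frac{2}{L+m} - \frac{\delta}{m} \right) \quad\text{or}\quad \alpha \geq \frac{1}{1+\delta}\left( \frac{2}{L+m} + \frac{\delta}{L} \right), \] then there exists $c>0$ such that for every $f \in \mathcal{S}(m,L)$ (with reference point $x_\star$), every sequence $x(k)\in\mathbb{R}^n$ and every error sequence $e(k)\in\mathbb{R}^n$ satisfying, for all $k\ge 0$, \[ x(k+1) = x(k) - \alpha\big(\nabla f(x(k)) + e(k)\big), \qquad |e(k)| \leq \delta\, |\nabla f(x(k))|, \] we have $|x(k)-x_\star| \leq c\, \rho^k\, |x(0)-x_\star|$ for all $k \geq 0$.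
   Context: For $0\le m<L$, $\mathcal{S}(m,L)$ denotes the set of $C^1$ functions $f:\mathbb{R}^n\to\mathbb{R}$ for which there is a reference point $x_\star\in\mathbb{R}^n$ such that for every $x\in\mathbb{R}^n$, $\langle m(x-x_\star) - \nabla f(x),\ L(x-x_\star) - \nabla f(x)\rangle \le 0$ (gradients bounded in the sector $[m,L]$ about $x_\star$). The constant $c$ may depend on $m,L,\alpha,\delta,\rho$ but not on $f$, $x$ or $e$. *)

theory Defs
  imports "HOL-Analysis.Analysis"
begin

definition is_C1_gradient :: "('a::euclidean_space \<Rightarrow> real) \<Rightarrow> ('a \<Rightarrow> 'a) \<Rightarrow> bool" where
  "is_C1_gradient f g \<longleftrightarrow>
     (\<forall>x. (f has_derivative (\<lambda>h. g x \<bullet> h)) (at x)) \<and> continuous_on UNIV g"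

definition sector_class :: "real \<Rightarrow> real \<Rightarrow> ('a::euclidean_space \<Rightarrow> real) \<Rightarrow> ('a \<Rightarrow> 'a) \<Rightarrow> 'a \<Rightarrow> bool" where
  "sector_class m L f g xs \<longleftrightarrow> is_C1_gradient f g \<and>
     (\<forall>x. (m *\<^sub>R (x - xs) - g x) \<bullet> (L *\<^sub>R (x - xs) - g x) \<le> 0)"

definition rho_GD :: "real \<Rightarrow> real \<Rightarrow> real \<Rightarrow> real \<Rightarrow> real" where
  "rho_GD m L \<alpha> \<delta> = max (1 - (1 - \<delta>) * \<alpha> * m) ((1 + \<delta>) * \<alpha> * L - 1)"

end

theory Submission
  imports Defs
begin

lemma tangent:
  fixes A B s q t st :: real
  assumes "A * B \<le> 0" "0 \<le> s" "s\<^sup>2 \<le> A + B * q\<^sup>2" "0 \<le> st" "st\<^sup>2 = A + B * t\<^sup>2"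
    and "0 \<le> A + B * t * q"
  shows "s * st \<le> A + B * t * q"
proof -
  have h0: "0 \<le> A + B * q\<^sup>2" using assms(2,3) by (smt (verit) zero_le_power2)
  have "(s * st)\<^sup>2 = s\<^sup>2 * st\<^sup>2" by (simp add: power_mult_distrib)
  also have "\<dots> \<le> (A + B * q\<^sup>2) * (A + B * t\<^sup>2)"
    using assms(3,5) mult_right_mono[of "s^2" "A+B*q^2" "st^2"] by (metis zero_le_power2)
  also have "\<dots> = (A + B*t*q)\<^sup>2 + A * B * (q - t)\<^sup>2" by (simp add: algebra_simps power2_eq_square)
  also have "\<dots> \<le> (A + B*t*q)\<^sup>2" using assms(1) by (simp add: mult_nonpos_nonneg)
  finally show ?thesis using power2_le_imp_le assms(6) by blast
qed

lemma scal1: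
  fixes m L \<alpha> \<delta> \<rho> q s :: real
  assumes "0 < m" "m < L" "\<alpha> > 0"
    and "0 \<le> \<delta>" "\<delta> < 2 / (L / m + 1)"
    and "\<rho> \<ge> rho_GD m L \<alpha> \<delta>"
    and cond: "\<alpha> \<le> (1 / (1 - \<delta>)) * (2 / (L + m) - \<delta> / m)
         \<or> \<alpha> \<ge> (1 / (1 + \<delta>)) * (2 / (L + m) + \<delta> / L)"
    and q: "m \<le> q" "q \<le> L" and s: "0 \<le> s"
    and sA: "s\<^sup>2 \<le> (1 - 2*\<alpha>*m*L/(m+L)) + \<alpha>*(\<alpha> - 2/(m+L)) * q\<^sup>2"
  shows "s + \<alpha> * \<delta> * q \<le> \<rho>"
proof -
  define A where "A = 1 - 2*\<alpha>*m*L/(m+L)"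
  define B where "B = \<alpha>*(\<alpha> - 2/(m+L))"
  have sA': "s\<^sup>2 \<le> A + B * q\<^sup>2" using sA by (simp add: A_def B_def)
  have mL: "0 < m + L" using assms by simp
  have "2 / (L / m + 1) = 2 * m / (L + m)" using assms(1) by (simp add: field_simps)
  hence "\<delta> * (L + m) < 2 * m" using assms mL by (simp add: divide_simps)
  hence "\<delta> * (L + m) < 1 * (L + m)" using assms(2) by simp
  hence d1: "\<delta> < 1" using mL by (simp add: add.commute mult_less_cancel_right)
  have em: "A + B * m\<^sup>2 = (1 - \<alpha>*m)\<^sup>2"
  proof -
    have e1: "A + B*m^2 = 1 - (2*\<alpha>*m*L/(m+L) + \<alpha>*(2/(m+L))*m^2) + \<alpha>^2*m^2"
      by (simp add: A_def B_def algebra_simps power2_eq_square)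
    have e2: "2*\<alpha>*m*L/(m+L) + \<alpha>*(2/(m+L))*m^2 = 2*\<alpha>*m"
    proof -
      have "2*\<alpha>*m*L/(m+L) + \<alpha>*(2/(m+L))*m^2 = (2*\<alpha>*m*L + 2*\<alpha>*m*m)/(m+L)"
        by (simp add: add_divide_distrib power2_eq_square)
      also have "\<dots> = (2*\<alpha>*m) * (m+L)/(m+L)" by (simp add: algebra_simps)
      finally show ?thesis using mL by simp
    qed
    show ?thesis unfolding e1 e2 by (simp add: algebra_simps power2_eq_square)
  qed
  have eL: "A + B * L\<^sup>2 = (1 - \<alpha>*L)\<^sup>2"
  proof -
    have e1: "A + B*L^2 = 1 - (2*\<alpha>*m*L/(m+L) + \<alpha>*(2/(m+L))*L^2) + \<alpha>^2*L^2"
      by (simp add: A_def B_def algebra_simps power2_eq_square)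
    have e2: "2*\<alpha>*m*L/(m+L) + \<alpha>*(2/(m+L))*L^2 = 2*\<alpha>*L"
    proof -
      have "2*\<alpha>*m*L/(m+L) + \<alpha>*(2/(m+L))*L^2 = (2*\<alpha>*m*L + 2*\<alpha>*L*L)/(m+L)"
        by (simp add: add_divide_distrib power2_eq_square)
      also have "\<dots> = (2*\<alpha>*L) * (m+L)/(m+L)" by (simp add: algebra_simps)
      finally show ?thesis using mL by simp
    qed
    show ?thesis unfolding e1 e2 by (simp add: algebra_simps power2_eq_square)
  qed
  have hB: "B*(L+m) = \<alpha>*(\<alpha>*(L+m) - 2)"
  proof -
    have "B*(L+m) = \<alpha>*\<alpha>*(L+m) - \<alpha>*((2/(m+L))*(L+m))" by (simp add: B_def algebra_simps)
    also have "(2/(m+L))*(L+m) = 2" using mL by (simp add: add.commute field_simps)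
    finally show ?thesis by (simp add: algebra_simps)
  qed
  have rg: "rho_GD m L \<alpha> \<delta> \<le> \<rho>" using assms by simp
  have r1: "1 - \<alpha>*m + \<alpha>*\<delta>*m \<le> \<rho>" using rg unfolding rho_GD_def by (simp add: algebra_simps)
  have r2: "\<alpha>*L + \<alpha>*\<delta>*L - 1 \<le> \<rho>" using rg unfolding rho_GD_def by (simp add: algebra_simps)
  have i1: "\<alpha>*m \<le> \<alpha>*L" using assms by simp
  have i2: "\<alpha>*\<delta>*m \<le> \<alpha>*\<delta>*L" using assms by (simp add: mult_left_mono)
  have "\<alpha>*(L-m)*\<delta> \<le> \<alpha>*(L-m)*1" using assms d1 by (intro mult_left_mono) auto
  hence i3: "\<alpha>*\<delta>*L - \<alpha>*\<delta>*m \<le> \<alpha>*L - \<alpha>*m" by (simp add: algebra_simps)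
  have hm: "\<bar>1 - \<alpha>*m\<bar> + \<alpha>*\<delta>*m \<le> \<rho>"
    using r1 r2 i1 i2 i3 by (simp add: abs_if)
  have hL: "\<bar>1 - \<alpha>*L\<bar> + \<alpha>*\<delta>*L \<le> \<rho>"
    using r1 r2 i1 i2 i3 by (simp add: abs_if)
  show ?thesis
  proof (cases "\<alpha> \<le> (1 / (1 - \<delta>)) * (2 / (L + m) - \<delta> / m)")
    case True
    then have "\<alpha> * (1 - \<delta>) \<le> 2 / (L + m) - \<delta> / m" using d1 by (simp add: field_simps)
    then have "\<alpha> * (1 - \<delta>) * (m * (L+m)) \<le> (2 / (L + m) - \<delta> / m) * (m * (L+m))"
      using assms(1) mL by (intro mult_right_mono) auto
    also have "(2 / (L + m) - \<delta> / m) * (m * (L+m)) = 2 * m - \<delta> * (L+m)"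
    proof -
      have "(2/(L+m))*(m*(L+m)) = 2*m" using mL by (simp add: add.commute)
      moreover have "(\<delta>/m)*(m*(L+m)) = \<delta>*(L+m)" using assms(1) by simp
      ultimately show ?thesis by (simp add: left_diff_distrib)
    qed
    finally have c: "\<alpha> * (1 - \<delta>) * m * (L+m) \<le> 2 * m - \<delta> * (L+m)" by (simp add: mult.assoc)
    have am: "\<alpha> * m < 1"
    proof -
      have i1: "\<alpha>*(1-\<delta>)*m*(L+m) = (\<alpha>*m)*((1-\<delta>)*(L+m))" by (simp add: algebra_simps)
      have i2: "2*m - \<delta>*(L+m) < 1*((1-\<delta>)*(L+m))" using assms(2) by (simp add: algebra_simps)
      have "(\<alpha>*m)*((1-\<delta>)*(L+m)) < 1*((1-\<delta>)*(L+m))" using c i1 i2 by linarith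
      moreover have "0 < (1-\<delta>)*(L+m)" using d1 mL by simp
      ultimately show ?thesis by (meson mult_right_less_imp_less less_imp_le)
    qed
    have B0: "B \<le> 0"
    proof -
      have X: "0 \<le> \<delta>*(L+m)*(1-\<alpha>*m)" using assms(4) mL am by simp
      have i1: "\<alpha>*(L+m)*m = \<alpha>*(1-\<delta>)*m*(L+m) + \<delta>*(L+m) - \<delta>*(L+m)*(1-\<alpha>*m)"
        by (simp add: algebra_simps)
      have "(\<alpha>*(L+m))*m \<le> 2*m" using i1 X c by linarith
      hence "\<alpha>*(L+m) \<le> 2" using assms(1) by simp
      hence "B*(L+m) \<le> 0" using hB assms(3) by (simp add: mult_nonneg_nonpos)
      thus ?thesis using mL by (simp add: mult_le_0_iff)
    qed
    have key: "B * m + \<alpha> * \<delta> * (1 - \<alpha>*m) \<le> 0"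
    proof -
      have "(B * m + \<alpha> * \<delta> * (1 - \<alpha>*m))*(L+m) = m*(B*(L+m)) + \<alpha> * \<delta> * (1 - \<alpha>*m)*(L+m)"
        by (simp add: algebra_simps)
      also have "\<dots> = \<alpha> * (\<alpha> * (1 - \<delta>) * m * (L+m) - (2 * m - \<delta> * (L+m)))"
        unfolding hB by (simp add: algebra_simps)
      also have "\<dots> \<le> 0" using c assms(3) by (simp add: mult_nonneg_nonpos)
      finally show ?thesis using mL by (simp add: mult_le_0_iff)
    qed
    have A0: "A \<ge> 0" using em B0 by (smt (verit) mult_nonpos_nonneg zero_le_power2)
    have t: "s * (1 - \<alpha>*m) \<le> A + B * m * q"
    proof (rule tangent)
      show "A * B \<le> 0" using A0 B0 by (simp add: mult_nonneg_nonpos)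
      have "m * q \<le> q * q" using q assms(1) by (simp add: mult_right_mono)
      hence "B * (q * q) \<le> B * (m * q)" using B0 by (simp add: mult_left_mono_neg)
      hence "A + B * q\<^sup>2 \<le> A + B * m * q" by (simp add: power2_eq_square mult.assoc)
      moreover have "0 \<le> A + B * q\<^sup>2" using sA' by (smt (verit) zero_le_power2)
      ultimately show "0 \<le> A + B * m * q" by simp
    qed (use s sA' am em in auto)
    have "s * (1 - \<alpha>*m) \<le> ((1 - \<alpha>*m) + \<alpha>*\<delta>*m - \<alpha>*\<delta>*q) * (1 - \<alpha>*m)"
    proof -
      have "(q - m) * (B * m + \<alpha> * \<delta> * (1 - \<alpha>*m)) \<le> 0" using key q by (simp add: mult_nonneg_nonpos)
      thus ?thesis using t em by (simp add: algebra_simps power2_eq_square)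
    qed
    hence "s \<le> (1 - \<alpha>*m) + \<alpha>*\<delta>*m - \<alpha>*\<delta>*q" using am by simp
    thus ?thesis using hm am by simp
  next
    case False
    hence "\<alpha> \<ge> (1 / (1 + \<delta>)) * (2 / (L + m) + \<delta> / L)" using cond by simp
    then have "\<alpha> * (1 + \<delta>) \<ge> 2 / (L + m) + \<delta> / L" using assms(4) by (simp add: field_simps)
    then have "\<alpha> * (1 + \<delta>) * (L * (L+m)) \<ge> (2 / (L + m) + \<delta> / L) * (L * (L+m))"
      using assms(1,2) mL by (intro mult_right_mono) auto
    moreover have "(2 / (L + m) + \<delta> / L) * (L * (L+m)) = 2 * L + \<delta> * (L+m)"
    proof -
      have "(2/(L+m))*(L*(L+m)) = 2*L" using mL by (simp add: add.commute)
      moreover have "(\<delta>/L)*(L*(L+m)) = \<delta>*(L+m)" using assms(1,2) by simp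
      ultimately show ?thesis by (simp add: distrib_right)
    qed
    ultimately have c: "\<alpha> * (1 + \<delta>) * L * (L+m) \<ge> 2 * L + \<delta> * (L+m)" by (simp add: mult.assoc)
    have aL: "\<alpha> * L > 1"
    proof -
      have i1: "\<alpha>*(1+\<delta>)*L*(L+m) = (\<alpha>*L)*((1+\<delta>)*(L+m))" by (simp add: algebra_simps)
      have i2: "2*L + \<delta>*(L+m) > 1*((1+\<delta>)*(L+m))" using assms(2) by (simp add: algebra_simps)
      have "(\<alpha>*L)*((1+\<delta>)*(L+m)) > 1*((1+\<delta>)*(L+m))" using c i1 i2 by linarith
      moreover have "0 < (1+\<delta>)*(L+m)" using assms(4) mL by simp
      ultimately show ?thesis by (meson mult_right_less_imp_less less_imp_le)
    qed
    have key: "B * L + \<alpha> * \<delta> * (\<alpha>*L - 1) \<ge> 0"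
    proof -
      have "(B * L + \<alpha> * \<delta> * (\<alpha>*L - 1))*(L+m) = L*(B*(L+m)) + \<alpha> * \<delta> * (\<alpha>*L - 1)*(L+m)"
        by (simp add: algebra_simps)
      also have "\<dots> = \<alpha> * (\<alpha> * (1 + \<delta>) * L * (L+m) - (2 * L + \<delta> * (L+m)))"
        unfolding hB by (simp add: algebra_simps)
      finally have "(B * L + \<alpha> * \<delta> * (\<alpha>*L - 1))*(L+m) \<ge> 0" using c assms(3) by simp
      thus ?thesis using mL by (simp add: zero_le_mult_iff)
    qed
    show ?thesis
    proof (cases "A * B \<le> 0")
      case True
      have t: "s * (\<alpha>*L - 1) \<le> A + B * L * q"
      proof (rule tangent)
        show "0 \<le> A + B * L * q"
        proof (cases "B \<ge> 0")
          case True
          have "q * q \<le> L * q" using q assms(1) by (simp add: mult_right_mono)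
          hence "B * (q * q) \<le> B * (L * q)" using True by (simp add: mult_left_mono)
          hence "A + B * q\<^sup>2 \<le> A + B * L * q" by (simp add: power2_eq_square mult.assoc)
          moreover have "0 \<le> A + B * q\<^sup>2" using sA' by (smt (verit) zero_le_power2)
          ultimately show ?thesis by simp
        next
          case False
          have "L * q \<le> L * L" using q assms(1,2) by (simp add: mult_left_mono)
          hence "B * (L * L) \<le> B * (L * q)" using False by (simp add: mult_left_mono_neg)
          hence "A + B * L\<^sup>2 \<le> A + B * L * q" by (simp add: power2_eq_square mult.assoc)
          thus ?thesis using eL by (smt (verit) zero_le_power2)
        qed
        show "(\<alpha>*L - 1)\<^sup>2 = A + B * L\<^sup>2" using eL by (simp add: power2_eq_square algebra_simps)
      qed (use True s sA' aL in auto)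
      have "s * (\<alpha>*L - 1) \<le> ((\<alpha>*L - 1) + \<alpha>*\<delta>*L - \<alpha>*\<delta>*q) * (\<alpha>*L - 1)"
      proof -
        have "(L - q) * (B * L + \<alpha> * \<delta> * (\<alpha>*L - 1)) \<ge> 0" using key q by simp
        thus ?thesis using t eL by (simp add: algebra_simps power2_eq_square)
      qed
      hence "s \<le> (\<alpha>*L - 1) + \<alpha>*\<delta>*L - \<alpha>*\<delta>*q" using aL by simp
      thus ?thesis using hL aL by simp
    next
      case False
      then have AB: "A * B > 0" by simp
      define lam where "lam = (L - q) / (L - m)"
      have l0: "0 \<le> lam" "lam \<le> 1" using q assms(2) by (auto simp: lam_def divide_simps)
      have "lam * (L - m) = L - q" using assms(2) by (simp add: lam_def)
      hence "lam * L - lam * m = L - q" by (simp add: algebra_simps)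
      hence qe: "q = lam * m + (1 - lam) * L" by (simp add: algebra_simps)
      define sm where "sm = \<bar>1 - \<alpha>*m\<bar>"
      define sL where "sL = \<bar>1 - \<alpha>*L\<bar>"
      have sm2: "sm\<^sup>2 = A + B * m\<^sup>2" using em by (simp add: sm_def)
      have sL2: "sL\<^sup>2 = A + B * L\<^sup>2" using eL by (simp add: sL_def)
      have smL: "sm * sL \<ge> A + B * m * L"
      proof -
        have "(sm * sL)\<^sup>2 = (A + B * m\<^sup>2) * (A + B * L\<^sup>2)" using sm2 sL2 by (simp add: power_mult_distrib)
        also have "\<dots> = (A + B * m * L)\<^sup>2 + (A * B) * (L - m)\<^sup>2" by (simp add: algebra_simps power2_eq_square)
        finally have "\<bar>A + B * m * L\<bar>\<^sup>2 \<le> (sm * sL)\<^sup>2" using AB by simp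
        hence "\<bar>A + B * m * L\<bar> \<le> sm * sL" by (rule power2_le_imp_le) (simp add: sm_def sL_def)
        thus ?thesis by simp
      qed
      have "s\<^sup>2 \<le> A + B * q\<^sup>2" by (rule sA')
      also have "A + B * q\<^sup>2 = lam\<^sup>2 * (A + B * m\<^sup>2) + (1-lam)\<^sup>2 * (A + B * L\<^sup>2) + (2*lam*(1-lam)) * (A + B*m*L)"
        by (subst qe) (simp add: algebra_simps power2_eq_square)
      also have "\<dots> \<le> lam\<^sup>2 * sm\<^sup>2 + (1-lam)\<^sup>2 * sL\<^sup>2 + (2*lam*(1-lam)) * (sm * sL)"
        using smL l0 sm2 sL2 by (simp add: mult_left_mono)
      also have "\<dots> = (lam * sm + (1 - lam) * sL)\<^sup>2" by (simp add: algebra_simps power2_eq_square)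
      finally have "s\<^sup>2 \<le> (lam * sm + (1 - lam) * sL)\<^sup>2" .
      moreover have "0 \<le> lam * sm + (1 - lam) * sL" using l0 by (simp add: sm_def sL_def)
      ultimately have s1: "s \<le> lam * sm + (1 - lam) * sL" using power2_le_imp_le by blast
      have e3: "\<alpha>*\<delta>*q = lam*(\<alpha>*\<delta>*m) + (1-lam)*(\<alpha>*\<delta>*L)" by (subst qe) (simp add: algebra_simps)
      have e4: "lam * (sm + \<alpha>*\<delta>*m) + (1 - lam) * (sL + \<alpha>*\<delta>*L) = lam * sm + (1 - lam) * sL + (lam*(\<alpha>*\<delta>*m) + (1-lam)*(\<alpha>*\<delta>*L))"
        by (simp add: algebra_simps)
      have "s + \<alpha>*\<delta>*q \<le> lam * (sm + \<alpha>*\<delta>*m) + (1 - lam) * (sL + \<alpha>*\<delta>*L)"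
        using s1 e3 e4 by linarith
      also have "\<dots> \<le> lam * \<rho> + (1 - lam) * \<rho>"
        using hm hL l0 by (intro add_mono mult_left_mono) (auto simp: sm_def sL_def)
      also have "lam * \<rho> + (1 - lam) * \<rho> = \<rho>" by (simp add: algebra_simps)
      finally show ?thesis .
    qed
  qed
qed
lemma step:
  fixes m L \<alpha> \<delta> \<rho> :: real and y u e :: "'a::euclidean_space"
  assumes "0 < m" "m < L" "\<alpha> > 0"
    and "0 \<le> \<delta>" "\<delta> < 2 / (L / m + 1)"
    and "\<rho> \<ge> rho_GD m L \<alpha> \<delta>"
    and cond: "\<alpha> \<le> (1 / (1 - \<delta>)) * (2 / (L + m) - \<delta> / m)
         \<or> \<alpha> \<ge> (1 / (1 + \<delta>)) * (2 / (L + m) + \<delta> / L)"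
    and sec: "(m *\<^sub>R y - u) \<bullet> (L *\<^sub>R y - u) \<le> 0"
    and en: "norm e \<le> \<delta> * norm u"
  shows "norm (y - \<alpha> *\<^sub>R (u + e)) \<le> \<rho> * norm y"
proof -
  define n where "n = norm y"
  define q where "q = norm u"
  define p where "p = u \<bullet> y"
  define s where "s = norm (y - \<alpha> *\<^sub>R u)"
  have mL: "0 < m + L" using assms by simp
  have secE: "(m *\<^sub>R y - u) \<bullet> (L *\<^sub>R y - u) = m*L*n\<^sup>2 - (m+L)*p + q\<^sup>2"
    unfolding n_def q_def p_def
    by (simp add: inner_diff_left inner_diff_right inner_commute power2_norm_eq_inner algebra_simps)
  have sE: "s\<^sup>2 = n\<^sup>2 - 2*\<alpha>*p + \<alpha>\<^sup>2*q\<^sup>2"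
  proof -
    have "s\<^sup>2 = (y - \<alpha> *\<^sub>R u) \<bullet> (y - \<alpha> *\<^sub>R u)" by (simp add: s_def power2_norm_eq_inner)
    also have "\<dots> = n\<^sup>2 - 2*\<alpha>*p + \<alpha>\<^sup>2*q\<^sup>2" unfolding n_def q_def p_def power2_norm_eq_inner
      by (simp add: inner_diff_left inner_diff_right inner_commute algebra_simps power2_eq_square)
    finally show ?thesis .
  qed
  have sec2: "m*L*n\<^sup>2 + q\<^sup>2 \<le> (m+L)*p" using sec secE by simp
  have CS: "p \<le> q * n" unfolding p_def q_def n_def by (rule norm_cauchy_schwarz)
  have main: "s + \<alpha> * \<delta> * q \<le> \<rho> * n"
  proof (cases "n = 0")
    case True
    hence "y = 0" by (simp add: n_def)
    hence "q\<^sup>2 \<le> 0" using sec2 by (simp add: p_def True)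
    hence "q = 0" by simp
    thus ?thesis using \<open>y = 0\<close> True by (simp add: s_def q_def)
  next
    case False
    hence n0: "n > 0" by (simp add: n_def)
    have "(q - m*n)*(q - L*n) = q\<^sup>2 - (m+L)*(q*n) + m*L*n\<^sup>2" by (simp add: algebra_simps power2_eq_square)
    also have "\<dots> \<le> q\<^sup>2 - (m+L)*p + m*L*n\<^sup>2" using CS mL by (simp add: mult_left_mono)
    also have "\<dots> \<le> 0" using sec2 by simp
    finally have prod: "(q - m*n)*(q - L*n) \<le> 0" .
    have mnLn: "m*n < L*n" using n0 assms by simp
    have q1: "m*n \<le> q" "q \<le> L*n" using prod mnLn by (auto simp: mult_le_0_iff)
    have "2*\<alpha>*(m*L*n\<^sup>2 + q\<^sup>2) \<le> 2*\<alpha>*((m+L)*p)" using sec2 assms(3) by simp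
    hence "2*\<alpha>*(m*L*n\<^sup>2 + q\<^sup>2)/(m+L) \<le> 2*\<alpha>*p" using mL by (simp add: divide_simps mult.commute mult.left_commute)
    moreover have "2*\<alpha>*(m*L*n\<^sup>2 + q\<^sup>2)/(m+L) = 2*\<alpha>*m*L/(m+L) * n\<^sup>2 + \<alpha>*(2/(m+L))*q\<^sup>2"
      by (simp add: add_divide_distrib algebra_simps)
    ultimately have H: "s\<^sup>2 \<le> (1 - 2*\<alpha>*m*L/(m+L)) * n\<^sup>2 + \<alpha>*(\<alpha> - 2/(m+L)) * q\<^sup>2"
      using sE by (simp add: algebra_simps power2_eq_square)
    have H2: "(s/n)\<^sup>2 \<le> (1 - 2*\<alpha>*m*L/(m+L)) + \<alpha>*(\<alpha> - 2/(m+L)) * (q/n)\<^sup>2"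
    proof -
      have "(s/n)\<^sup>2 = s\<^sup>2 / n\<^sup>2" by (simp add: power_divide)
      also have "\<dots> \<le> ((1 - 2*\<alpha>*m*L/(m+L)) * n\<^sup>2 + \<alpha>*(\<alpha> - 2/(m+L)) * q\<^sup>2) / n\<^sup>2"
        using H n0 by (simp add: divide_right_mono)
      also have "\<dots> = (1 - 2*\<alpha>*m*L/(m+L)) + \<alpha>*(\<alpha> - 2/(m+L)) * (q/n)\<^sup>2"
        using n0 by (simp add: add_divide_distrib power_divide)
      finally show ?thesis .
    qed
    have "s/n + \<alpha> * \<delta> * (q/n) \<le> \<rho>"
    proof (rule scal1[OF assms(1-7)])
      show "m \<le> q/n" using q1 n0 by (simp add: divide_simps)
      show "q/n \<le> L" using q1 n0 by (simp add: divide_simps)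
      show "0 \<le> s/n" using n0 by (simp add: s_def)
    qed (rule H2)
    hence "(s/n + \<alpha> * \<delta> * (q/n)) * n \<le> \<rho> * n" using n0 by (simp add: mult_right_mono)
    thus ?thesis using n0 by (simp add: algebra_simps)
  qed
  have "norm (y - \<alpha> *\<^sub>R (u + e)) = norm ((y - \<alpha> *\<^sub>R u) - \<alpha> *\<^sub>R e)" by (simp add: algebra_simps)
  also have "\<dots> \<le> s + norm (\<alpha> *\<^sub>R e)" unfolding s_def by (rule norm_triangle_ineq4)
  also have "norm (\<alpha> *\<^sub>R e) \<le> \<alpha> * \<delta> * q" using en assms(3) by (simp add: q_def mult_left_mono mult.assoc)
  finally show ?thesis using main by (simp add: n_def)
qed

theorem proposition1p1:
  fixes m L \<alpha> \<delta> \<rho> :: real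
  assumes "0 < m" "m < L" "\<alpha> > 0"
    and "0 \<le> \<delta>" "\<delta> < 2 / (L / m + 1)"
    and "\<rho> \<ge> rho_GD m L \<alpha> \<delta>"
    and "\<alpha> \<le> (1 / (1 - \<delta>)) * (2 / (L + m) - \<delta> / m)
         \<or> \<alpha> \<ge> (1 / (1 + \<delta>)) * (2 / (L + m) + \<delta> / L)"
  shows "\<exists>c>0. \<forall>(f :: 'a::euclidean_space \<Rightarrow> real) g xs (x :: nat \<Rightarrow> 'a) e.
           sector_class m L f g xs \<longrightarrow>
           (\<forall>k. x (Suc k) = x k - \<alpha> *\<^sub>R (g (x k) + e k)) \<longrightarrow>
           (\<forall>k. norm (e k) \<le> \<delta> * norm (g (x k))) \<longrightarrow>
           (\<forall>k. norm (x k - xs) \<le> c * \<rho> ^ k * norm (x 0 - xs))"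
proof -
  have r0: "0 \<le> \<rho>"
  proof -
    have "0 \<le> \<alpha>*(L-m) + \<alpha>*\<delta>*(L+m)" using assms by simp
    hence "0 \<le> (1 - (1 - \<delta>) * \<alpha> * m) + ((1 + \<delta>) * \<alpha> * L - 1)" by (simp add: algebra_simps)
    thus ?thesis using assms(6) unfolding rho_GD_def by linarith
  qed
  show ?thesis
  proof (intro exI[of _ 1] conjI allI impI)
    show "(0::real) < 1" by simp
  next
    fix f :: "'a \<Rightarrow> real" and g xs and x :: "nat \<Rightarrow> 'a" and e k
    assume sc: "sector_class m L f g xs"
      and it: "\<forall>k. x (Suc k) = x k - \<alpha> *\<^sub>R (g (x k) + e k)"
      and en: "\<forall>k. norm (e k) \<le> \<delta> * norm (g (x k))"
    have sec: "\<And>z. (m *\<^sub>R (z - xs) - g z) \<bullet> (L *\<^sub>R (z - xs) - g z) \<le> 0"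
      using sc unfolding sector_class_def by blast
    show "norm (x k - xs) \<le> 1 * \<rho> ^ k * norm (x 0 - xs)"
    proof (induction k)
      case 0
      then show ?case by simp
    next
      case (Suc k)
      have eq: "x (Suc k) - xs = (x k - xs) - \<alpha> *\<^sub>R (g (x k) + e k)" using it by simp
      have st: "norm ((x k - xs) - \<alpha> *\<^sub>R (g (x k) + e k)) \<le> \<rho> * norm (x k - xs)"
        using step[OF assms sec[of "x k"] en[rule_format, of k]] .
      have "norm (x (Suc k) - xs) \<le> \<rho> * norm (x k - xs)" unfolding eq by (rule st)
      also have "\<dots> \<le> \<rho> * (1 * \<rho> ^ k * norm (x 0 - xs))"
        using Suc r0 by (simp add: mult_left_mono)
      finally show ?case by (simp add: mult.assoc)
    qed
  qed
qed

end
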